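(* Let $\Omega \subset \mathbb{R}^2$ be open, bounded with $|\Omega| = 1$, and let $\Omega = \bigcup_{i=1}^N \Omega_i$ be a partition into pairwise disjoint measurable sets of positive measure. Define $\eta_0>0$ by $\pi\eta_0^2 = \min_{1\le i\le N}|\Omega_i|$. For each $i$ let $B_i$ be a disk with center $x_i$ and radius $r_i$ such that $|B_i| = |\Omega_i|$ and $|\Omega_i\triangle B_i| = |\Omega_i|\mathcal{A}(\Omega_i)$. Let $c_1 > 0$, $0 < c_2 \le \frac{1}{20}$, $d_1 \ge 0$, and assume $\sum_{i=1}^N \frac{|\Omega_i|}{|\Omega|}\mathcal{A}(\Omega_i) \le d_1$. Let $I = \{ i : |\Omega_i| \ge (1+c_1)\pi\eta_0^2\}$ and $$J = \{ i \notin I : \exists\, j \notin I,\ j \ne i,\ |x_i - x_j| \le (1-c_2)(r_i + r_j)\}.$$ Then $$\left|\bigcup_{i \in J} B_i\right| \le \frac{20\pi}{37}\,\frac{1+c_1}{c_2^{3/2}}\, d_1.$$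
   Context: $|\cdot|$ is Lebesgue measure, $\triangle$ is symmetric difference. Fraenkel asymmetry: $\mathcal{A}(E) := \inf_B \frac{|E\triangle B|}{|E|}$ over disks $B$ with $|B| = |E|$ (the infimum is attained). *)

theory Defs
  imports "HOL-Analysis.Analysis"
begin

definition sym_diff :: "'a set \<Rightarrow> 'a set \<Rightarrow> 'a set" where
  "sym_diff E B = (E - B) \<union> (B - E)"

definition fraenkel_asymmetry :: "(real^2) set \<Rightarrow> real" where
  "fraenkel_asymmetry E =
     Inf {measure lebesgue (sym_diff E B) / measure lebesgue E | B.
            (\<exists>x r. B = ball x r) \<and> measure lebesgue B = measure lebesgue E}"

end

theory Submission
  imports Defs
begin


lemma ineq_aux:
  fixes c \<rho> e s t :: real
  assumes "\<rho> > 0" "c > 0" "c \<le> 1/20" "0 \<le> e" "e \<le> 2*(1-c)*\<rho>"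
    "\<bar>s\<bar> \<le> c*\<rho>/2" "\<bar>t\<bar> \<le> 99/100 * sqrt c * \<rho>"
  shows "(e/2 + s)^2 + t^2 < \<rho>^2"
proof -
  have a: "\<bar>e/2 + s\<bar> \<le> (1 - c/2)*\<rho>" using assms by (auto simp: abs_le_iff algebra_simps)
  have "(e/2+s)^2 \<le> ((1 - c/2)*\<rho>)^2"
    using a by (metis abs_ge_zero order_trans power2_abs power_mono)
  moreover have "t^2 \<le> (99/100 * sqrt c * \<rho>)^2"
    using assms(7) by (metis abs_ge_zero order_trans power2_abs power_mono)
  moreover have "(99/100 * sqrt c * \<rho>)^2 = 9801/10000 * c * \<rho>^2"
    proof -
    have "(99/100 * sqrt c * \<rho>)^2 = (99/100)^2 * (sqrt c)^2 * \<rho>^2" by (simp only: power_mult_distrib)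
    thus ?thesis using assms by (simp add: power2_eq_square)
  qed
  moreover have "((1 - c/2)*\<rho>)^2 + 9801/10000 * c * \<rho>^2 < \<rho>^2"
  proof -
    have "(1 - c/2)^2 + 9801/10000 * c < 1" using assms by (simp add: power2_eq_square algebra_simps)
    hence "((1 - c/2)^2 + 9801/10000 * c) * \<rho>^2 < 1 * \<rho>^2" using assms by (intro mult_strict_right_mono) auto
    moreover have "((1 - c/2)*\<rho>)^2 + 9801/10000*c*\<rho>^2 = ((1 - c/2)^2 + 9801/10000*c)*\<rho>^2"
      by (simp add: power_mult_distrib distrib_right)
    ultimately show ?thesis by linarith
  qed
  ultimately show ?thesis by linarith
qed

lemma norm2_cart: "norm (z::real^2) ^2 = (z$1)^2 + (z$2)^2"
  by (simp add: norm_eq_sqrt_inner inner_vec_def sum_2 power2_eq_square)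

lemma lens:
  fixes p q :: "real^2"
  assumes rho: "\<rho> > 0" and c: "0 < c" "c \<le> 1/20" and d: "dist p q \<le> 2*(1-c)*\<rho>"
  shows "99/50 * c powr (3/2) * \<rho>^2 \<le> measure lebesgue (ball p \<rho> \<inter> ball q \<rho>)"
proof -
  define e where "e = dist p q"
  define u :: "real^2" where "u = (if p = q then axis 1 1 else (1/e) *\<^sub>R (q - p))"
  have nu: "norm u = 1" using e_def by (auto simp: u_def dist_norm norm_minus_commute)
  have qp: "q - p = e *\<^sub>R u" using e_def by (auto simp: u_def dist_norm norm_minus_commute)
  have "\<exists>f::real^2\<Rightarrow>real^2. orthogonal_transformation f \<and> f (axis 1 1) = u"
    by (rule orthogonal_transformation_exists_1[of "axis 1 (1::real)" u]) (simp add: nu | blast)+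
  then obtain f :: "real^2\<Rightarrow>real^2" where f: "orthogonal_transformation f" "f (axis 1 1) = u" by blast
  have lin: "linear f" using f orthogonal_transformation_linear by blast
  define m where "m = p + (e/2) *\<^sub>R u"
  define \<alpha> where "\<alpha> = c*\<rho>/2"
  define \<beta> where "\<beta> = 99/100 * sqrt c * \<rho>"
  define K :: "(real^2) set" where "K = cbox (vector [-\<alpha>, -\<beta>]) (vector [\<alpha>, \<beta>])"
  have ab: "\<alpha> > 0" "\<beta> > 0" using rho c by (auto simp: \<alpha>_def \<beta>_def)
  have Kmem: "\<bar>z$1\<bar> \<le> \<alpha> \<and> \<bar>z$2\<bar> \<le> \<beta>" if "z \<in> K" for z
    using that by (auto simp: K_def mem_box_cart forall_2 abs_le_iff)
  have "0 \<in> K" using ab by (auto simp: K_def mem_box_cart forall_2)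
  hence Kne: "K \<noteq> {}" by auto
  have mK: "measure lebesgue K = (2*\<alpha>) * (2*\<beta>)"
  proof -
    have "measure lborel K = (2*\<alpha>) * (2*\<beta>)"
      using Kne unfolding K_def by (subst content_cbox_cart) (auto simp: prod_2 UNIV_2)
    thus ?thesis unfolding K_def by (metis measure_completion sets_lborel borel_closed closed_cbox)
  qed
  have val: "2*\<alpha> * (2*\<beta>) = 99/50 * c powr (3/2) * \<rho>^2"
  proof -
    have "c powr (3/2) = c powr (1 + 1/2)" by simp
    also have "\<dots> = c powr 1 * c powr (1/2)" by (rule powr_add)
    also have "\<dots> = c * sqrt c" using c by (simp add: powr_half_sqrt)
    finally have "c powr (3/2) = c * sqrt c" .
    thus ?thesis by (simp add: \<alpha>_def \<beta>_def power2_eq_square)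
  qed
  define S where "S = (\<lambda>z. m + f z) ` K"
  have SK: "S = (+) m ` (f ` K)" unfolding S_def by auto
  have fK: "f ` K \<in> lmeasurable" using measurable_orthogonal_image[OF f(1)] lmeasurable_cbox K_def by metis
  have mS: "measure lebesgue S = measure lebesgue K"
    using SK measure_translation measure_orthogonal_image[OF f(1)] lmeasurable_cbox K_def by metis
  have Sm: "S \<in> lmeasurable" using SK measurable_translation[OF fK] by simp
  have e0: "0 \<le> e" "e \<le> 2*(1-c)*\<rho>" using d e_def by auto
  have qeq: "q = p + e *\<^sub>R u" using qp by (metis add.commute diff_add_cancel)
  have sub: "S \<subseteq> ball p \<rho> \<inter> ball q \<rho>"
  proof
    fix w assume "w \<in> S"
    then obtain z where z: "z \<in> K" "w = m + f z" unfolding S_def by auto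
    have k1: "\<bar>z$1\<bar> \<le> c*\<rho>/2" "\<bar>z$2\<bar> \<le> 99/100 * sqrt c * \<rho>"
      using Kmem[OF z(1)] by (simp_all add: \<alpha>_def \<beta>_def)
    have k2: "\<bar>- z$1\<bar> \<le> c*\<rho>/2" using k1 by simp
    have fa: "f ((e/2) *\<^sub>R axis 1 1) = (e/2) *\<^sub>R u" using lin f(2) by (simp add: linear_scale)
    have "w - p = f ((e/2) *\<^sub>R axis 1 1 + z)" using z fa by (simp add: m_def linear_add[OF lin])
    hence "norm (w - p) = norm ((e/2) *\<^sub>R axis 1 1 + z)" using f(1) orthogonal_transformation_norm by metis
    hence "(norm (w - p))^2 = (e/2 + z$1)^2 + (z$2)^2" by (simp add: norm2_cart axis_def)
    also have "\<dots> < \<rho>^2" by (rule ineq_aux[OF rho c e0 k1])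
    finally have 1: "dist p w < \<rho>" using rho by (simp add: dist_norm norm_minus_commute power_less_imp_less_base)
    have eh: "e *\<^sub>R u = (e/2) *\<^sub>R u + (e/2) *\<^sub>R u" by (simp add: scaleR_add_left[symmetric])
    have "w - q = f z - (e/2) *\<^sub>R u" unfolding z(2) m_def qeq eh by (simp add: algebra_simps)
    also have "\<dots> = f (z - (e/2) *\<^sub>R axis 1 1)" using fa by (simp add: linear_diff[OF lin])
    finally have "norm (w - q) = norm (z - (e/2) *\<^sub>R axis 1 1)" using f(1) orthogonal_transformation_norm by metis
    hence "(norm (w - q))^2 = (e/2 + (- z$1))^2 + (z$2)^2" by (simp add: norm2_cart axis_def power2_commute)
    also have "\<dots> < \<rho>^2" by (rule ineq_aux[OF rho c e0 k2 k1(2)])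
    finally have 2: "dist q w < \<rho>" using rho by (simp add: dist_norm norm_minus_commute power_less_imp_less_base)
    show "w \<in> ball p \<rho> \<inter> ball q \<rho>" using 1 2 by auto
  qed
  have "ball p \<rho> \<inter> ball q \<rho> \<in> lmeasurable"
    by (rule fmeasurable_Int_fmeasurable[OF lmeasurable_ball fmeasurableD[OF lmeasurable_ball]])
  hence "measure lebesgue S \<le> measure lebesgue (ball p \<rho> \<inter> ball q \<rho>)"
    using measure_mono_fmeasurable[OF sub fmeasurableD[OF Sm]] by blast
  thus ?thesis using mS mK val by simp
qed


lemma dist_line:
  fixes x v :: "'a::real_normed_vector"
  assumes "norm v = 1"
  shows "dist (x + a *\<^sub>R v) (x + b *\<^sub>R v) = \<bar>a - b\<bar>"
proof -
  have "x + a *\<^sub>R v - (x + b *\<^sub>R v) = (a - b) *\<^sub>R v" by (simp add: algebra_simps)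
  thus ?thesis using assms by (simp add: dist_norm)
qed

lemma ball_sub: "dist x p + \<rho> \<le> R \<Longrightarrow> ball p \<rho> \<subseteq> ball x R"
proof
  fix z assume a: "dist x p + \<rho> \<le> R" and "z \<in> ball p \<rho>"
  then have "dist p z < \<rho>" by simp
  hence "dist x z < R" using dist_triangle[of x z p] a by linarith
  thus "z \<in> ball x R" by simp
qed

lemma shrink:
  fixes x y :: "'a::real_normed_vector"
  assumes rho: "\<rho> > 0" and R: "R1 \<ge> \<rho>" "R2 \<ge> \<rho>" and c: "0 < c" "c < 1"
    and d: "dist x y \<le> (1-c)*(R1+R2)"
  shows "\<exists>p q. ball p \<rho> \<subseteq> ball x R1 \<and> ball q \<rho> \<subseteq> ball y R2 \<and> dist p q \<le> 2*(1-c)*\<rho>"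
proof (cases "x = y")
  case True
  have "ball x \<rho> \<subseteq> ball x R1" "ball x \<rho> \<subseteq> ball y R2" using R True by auto
  moreover have "dist x x \<le> 2*(1-c)*\<rho>" using c rho by simp
  ultimately show ?thesis by (intro exI[of _ x] exI[of _ x] conjI)
next
  case False
  define e where "e = dist x y"
  have e: "e > 0" using False e_def by simp
  define v where "v = (1/e) *\<^sub>R (y - x)"
  have nv: "norm v = 1" using e by (simp add: v_def e_def dist_norm norm_minus_commute)
  have yv: "y = x + e *\<^sub>R v" using e by (simp add: v_def)
  define a where "a = min (R1-\<rho>) e"
  define b where "b = max (e-(R2-\<rho>)) a"
  have a0: "0 \<le> a" "a \<le> R1 - \<rho>" "a \<le> e" using R e by (auto simp: a_def)
  have b0: "a \<le> b" "e - b \<le> R2 - \<rho>" "b \<le> e" using R a0 by (auto simp: b_def)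
  have ba: "b - a \<le> 2*(1-c)*\<rho>"
  proof (cases "e-(R2-\<rho>) \<le> a")
    case True then show ?thesis using c rho by (simp add: b_def max_def)
  next
    case False
    hence "a = R1 - \<rho>" using R by (cases "R1 - \<rho> \<le> e") (auto simp: a_def)
    hence "b - a = e - R1 - R2 + 2*\<rho>" using False by (simp add: b_def)
    also have "\<dots> \<le> 2*\<rho> - c*(R1+R2)" using d e_def by (simp add: algebra_simps)
    also have "\<dots> \<le> 2*(1-c)*\<rho>"
    proof -
      have "c*\<rho> \<le> c*R1" "c*\<rho> \<le> c*R2" using R c by (simp_all add: mult_left_mono)
      thus ?thesis by (simp add: algebra_simps)
    qed
    finally show ?thesis .
  qed
  define p where "p = x + a *\<^sub>R v"
  define q where "q = x + b *\<^sub>R v"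
  have "dist x p = a" using dist_line[OF nv, of x 0 a] a0 by (simp add: p_def)
  hence 1: "ball p \<rho> \<subseteq> ball x R1" using a0 by (intro ball_sub) simp
  have "dist y q = e - b" using dist_line[OF nv, of x e b] b0 by (simp add: q_def yv)
  hence 2: "ball q \<rho> \<subseteq> ball y R2" using b0 by (intro ball_sub) simp
  have "dist p q = b - a" using dist_line[OF nv, of x a b] b0 by (simp add: p_def q_def)
  hence "dist p q \<le> 2*(1-c)*\<rho>" using ba by simp
  thus ?thesis using 1 2 by (intro exI[of _ p] exI[of _ q] conjI)
qed

lemma symdiff_meas:
  assumes A: "A \<in> lmeasurable" and B: "B \<in> lmeasurable"
    and eq: "measure lebesgue A = measure lebesgue B"
  shows "measure lebesgue (sym_diff A B) = 2 * measure lebesgue (B - A)"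
proof -
  have "A - B = A - (A \<inter> B)" by auto
  hence 1: "measure lebesgue (A - B) = measure lebesgue A - measure lebesgue (A \<inter> B)"
    using A B measure_Diff[of lebesgue A "A \<inter> B"] by (auto simp: fmeasurable_def)
  have "B - A = B - (A \<inter> B)" by auto
  hence 2: "measure lebesgue (B - A) = measure lebesgue B - measure lebesgue (A \<inter> B)"
    using A B measure_Diff[of lebesgue B "A \<inter> B"] by (auto simp: fmeasurable_def)
  have f1: "A - B \<in> lmeasurable" using A B by (simp add: fmeasurable_Diff fmeasurableD)
  have f2: "B - A \<in> lmeasurable" using A B by (simp add: fmeasurable_Diff fmeasurableD)
  have "(A - B) \<inter> (B - A) = {}" by auto
  hence "measure lebesgue (sym_diff A B) = measure lebesgue (A - B) + measure lebesgue (B - A)"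
    using measure_Un3[OF f1 f2] by (simp add: sym_diff_def)
  thus ?thesis using 1 2 eq by simp
qed

theorem mainTheorem5:
  fixes \<Omega> :: "(real^2) set" and \<Omega>s :: "nat \<Rightarrow> (real^2) set" and N :: nat
    and \<eta>0 c1 c2 d1 :: real and x :: "nat \<Rightarrow> real^2" and r :: "nat \<Rightarrow> real"
    and I J :: "nat set"
  assumes "open \<Omega>" and "bounded \<Omega>" and "measure lebesgue \<Omega> = 1"
    and "N \<ge> 1"
    and "\<Omega> = (\<Union>i\<in>{1..N}. \<Omega>s i)"
    and "\<And>i j. i \<in> {1..N} \<Longrightarrow> j \<in> {1..N} \<Longrightarrow> i \<noteq> j \<Longrightarrow> \<Omega>s i \<inter> \<Omega>s j = {}"
    and "\<And>i. i \<in> {1..N} \<Longrightarrow> \<Omega>s i \<in> sets lebesgue"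
    and "\<And>i. i \<in> {1..N} \<Longrightarrow> measure lebesgue (\<Omega>s i) > 0"
    and "\<eta>0 > 0"
    and "pi * \<eta>0^2 = Min ((\<lambda>i. measure lebesgue (\<Omega>s i)) ` {1..N})"
    and "\<And>i. i \<in> {1..N} \<Longrightarrow> measure lebesgue (ball (x i) (r i)) = measure lebesgue (\<Omega>s i)"
    and "\<And>i. i \<in> {1..N} \<Longrightarrow> measure lebesgue (sym_diff (\<Omega>s i) (ball (x i) (r i)))
             = measure lebesgue (\<Omega>s i) * fraenkel_asymmetry (\<Omega>s i)"
    and "c1 > 0" and "c2 > 0" and "c2 \<le> 1/20" and "d1 \<ge> 0"
    and "(\<Sum>i=1..N. measure lebesgue (\<Omega>s i) / measure lebesgue \<Omega> * fraenkel_asymmetry (\<Omega>s i)) \<le> d1"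
    and "I = {i \<in> {1..N}. measure lebesgue (\<Omega>s i) \<ge> (1 + c1) * pi * \<eta>0^2}"
    and "J = {i \<in> {1..N} - I. \<exists>j \<in> {1..N} - I. j \<noteq> i \<and>
               dist (x i) (x j) \<le> (1 - c2) * (r i + r j)}"
  shows "measure lebesgue (\<Union>i\<in>J. ball (x i) (r i))
           \<le> 20 * pi / 37 * ((1 + c1) / c2 powr (3/2)) * d1"
proof -
  let ?\<mu> = "measure lebesgue"
  define B where "B k = ball (x k) (r k)" for k
  define S where "S k = ?\<mu> (B k - \<Omega>s k)" for k
  define L where "L = 99/50 * c2 powr (3/2) * \<eta>0^2"
  have finN: "finite {1..N}" by simp
  have JN: "J \<subseteq> {1..N}" using assms(19) by auto
  have finJ: "finite J" using JN finite_subset by blast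
  have sub\<Omega>: "\<Omega>s k \<subseteq> \<Omega>" if "k \<in> {1..N}" for k using assms(5) that by auto
  have lm: "\<Omega>s k \<in> lmeasurable" if "k \<in> {1..N}" for k
    by (rule bounded_set_imp_lmeasurable[OF bounded_subset[OF assms(2) sub\<Omega>[OF that]] assms(7)[OF that]])
  have mge: "pi * \<eta>0^2 \<le> ?\<mu> (\<Omega>s k)" if "k \<in> {1..N}" for k
    using assms(10) that by (simp add: Min_le)
  have ballm: "?\<mu> (ball (c::real^2) \<rho>) = \<rho>^2 * pi" if "\<rho> \<ge> 0" for c \<rho>
    using that circle_area by (metis measure_completion sets_lborel borel_open open_ball)
  have rpos: "r k > 0" if "k \<in> {1..N}" for k
  proof (rule ccontr)
    assume "\<not> r k > 0"
    hence "ball (x k) (r k) = {}" by auto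
    hence "?\<mu> (ball (x k) (r k)) = 0" by (simp only: measure_empty)
    thus False using assms(11)[OF that] assms(8)[OF that] by linarith
  qed
  have Bm: "?\<mu> (B k) = ?\<mu> (\<Omega>s k)" if "k \<in> {1..N}" for k unfolding B_def by (rule assms(11)[OF that])
  have rge: "r k \<ge> \<eta>0" if "k \<in> {1..N}" for k
  proof -
    have e1: "?\<mu> (B k) = (r k)^2 * pi" unfolding B_def
      by (rule ballm) (use rpos[OF that] in linarith)
    have "\<eta>0^2 * pi \<le> (r k)^2 * pi" using mge[OF that] Bm[OF that] e1 mult.commute[of pi "\<eta>0^2"] by linarith
    hence "\<eta>0^2 \<le> (r k)^2" using pi_gt_zero by (rule mult_right_le_imp_le)
    thus ?thesis using rpos[OF that] power2_le_imp_le[of \<eta>0 "r k"] by linarith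
  qed
  have Slm: "B k - \<Omega>s k \<in> lmeasurable" if "k \<in> {1..N}" for k
    unfolding B_def by (rule fmeasurable_Diff) (auto intro: fmeasurableD assms(7)[OF that])
  have S0: "S k \<ge> 0" for k by (simp add: S_def)
  have sd: "?\<mu> (sym_diff (\<Omega>s k) (B k)) = 2 * S k" if "k \<in> {1..N}" for k
    unfolding S_def by (rule symdiff_meas[OF lm[OF that]]) (auto simp: B_def Bm[OF that, unfolded B_def])
  have sumS: "(\<Sum>k=1..N. 2 * S k) \<le> d1"
  proof -
    have "(\<Sum>k=1..N. 2 * S k) = (\<Sum>i=1..N. ?\<mu> (\<Omega>s i) / ?\<mu> \<Omega> * fraenkel_asymmetry (\<Omega>s i))"
      using sd assms(12) assms(3) by (intro sum.cong) (auto simp: B_def)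
    thus ?thesis using assms(17) by simp
  qed
  define P where "P i j \<longleftrightarrow> j \<in> {1..N} - I \<and> j \<noteq> i \<and> dist (x i) (x j) \<le> (1 - c2) * (r i + r j)" for i j
  define jj where "jj i = (SOME j. P i j)" for i
  have jj: "P i (jj i)" if "i \<in> J" for i
  proof -
    have "\<exists>j. P i j" using that assms(19) by (auto simp: P_def)
    thus ?thesis unfolding jj_def by (rule someI_ex)
  qed
  have iN: "i \<in> {1..N}" if "i \<in> J" for i using that JN by auto
  have jN: "jj i \<in> {1..N}" if "i \<in> J" for i using jj[OF that] by (auto simp: P_def)
  have c2': "c2 < 1" using assms(15) by simp
  have Llow: "L \<le> ?\<mu> (B i \<inter> B (jj i))" if i: "i \<in> J" for i
  proof -
    have dd: "dist (x i) (x (jj i)) \<le> (1-c2)*(r i + r (jj i))" using jj[OF i] by (simp add: P_def)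
    have "\<exists>p q. ball p \<eta>0 \<subseteq> B i \<and> ball q \<eta>0 \<subseteq> B (jj i) \<and> dist p q \<le> 2*(1-c2)*\<eta>0"
      unfolding B_def by (rule shrink[OF assms(9) rge[OF iN[OF i]] rge[OF jN[OF i]] assms(14) c2' dd])
    then obtain p q where pq: "ball p \<eta>0 \<subseteq> B i" "ball q \<eta>0 \<subseteq> B (jj i)" "dist p q \<le> 2*(1-c2)*\<eta>0"
      by blast
    have "L \<le> ?\<mu> (ball p \<eta>0 \<inter> ball q \<eta>0)" unfolding L_def by (rule lens[OF assms(9) assms(14) assms(15) pq(3)])
    also have "\<dots> \<le> ?\<mu> (B i \<inter> B (jj i))"
    proof (rule measure_mono_fmeasurable)
      show "ball p \<eta>0 \<inter> ball q \<eta>0 \<subseteq> B i \<inter> B (jj i)" using pq by auto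
      show "ball p \<eta>0 \<inter> ball q \<eta>0 \<in> sets lebesgue" by auto
      show "B i \<inter> B (jj i) \<in> lmeasurable" unfolding B_def
        by (rule fmeasurable_Int_fmeasurable[OF lmeasurable_ball fmeasurableD[OF lmeasurable_ball]])
    qed
    finally show ?thesis .
  qed
  define T where "T i k = ?\<mu> (\<Omega>s i \<inter> (B k - \<Omega>s k))" for i k
  have T0: "T i k \<ge> 0" for i k by (simp add: T_def)
  have split: "?\<mu> (B i \<inter> B (jj i)) \<le> S i + T i (jj i)" if i: "i \<in> J" for i
  proof -
    have ne: "jj i \<noteq> i" using jj[OF i] by (simp add: P_def)
    have dj: "\<Omega>s i \<inter> \<Omega>s (jj i) = {}" using assms(6)[OF iN[OF i] jN[OF i]] ne by auto
    have m1: "B i \<inter> B (jj i) \<subseteq> (B i - \<Omega>s i) \<union> (\<Omega>s i \<inter> (B (jj i) - \<Omega>s (jj i)))" using dj by auto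
    have m2: "B i \<inter> B (jj i) \<in> sets lebesgue" unfolding B_def by (intro sets.Int) auto
    have m3: "\<Omega>s i \<inter> (B (jj i) - \<Omega>s (jj i)) \<in> lmeasurable"
      using lm[OF iN[OF i]] fmeasurableD[OF Slm[OF jN[OF i]]] by (rule fmeasurable_Int_fmeasurable)
    have m4: "(B i - \<Omega>s i) \<union> (\<Omega>s i \<inter> (B (jj i) - \<Omega>s (jj i))) \<in> lmeasurable"
      using Slm[OF iN[OF i]] m3 by (rule fmeasurable.Un)
    have "?\<mu> (B i \<inter> B (jj i)) \<le> ?\<mu> ((B i - \<Omega>s i) \<union> (\<Omega>s i \<inter> (B (jj i) - \<Omega>s (jj i))))"
      using m1 m2 m4 by (rule measure_mono_fmeasurable)
    also have "\<dots> \<le> S i + T i (jj i)" unfolding S_def T_def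
      using Slm[OF iN[OF i]] Slm[OF jN[OF i]] lm[OF iN[OF i]] by (intro measure_Un_le) (auto intro: fmeasurableD)
    finally show ?thesis .
  qed
  have Tsum: "(\<Sum>i\<in>J. T i k) \<le> S k" if k: "k \<in> {1..N}" for k
  proof -
    have "(\<Sum>i\<in>J. T i k) = ?\<mu> (\<Union>i\<in>J. \<Omega>s i \<inter> (B k - \<Omega>s k))" unfolding T_def
    proof (rule measure_UNION'[symmetric, OF finJ])
      fix i assume "i \<in> J" thus "\<Omega>s i \<inter> (B k - \<Omega>s k) \<in> lmeasurable"
        using lm[OF iN] Slm[OF k] by (auto intro: fmeasurable_Int_fmeasurable fmeasurableD)
    next
      show "pairwise (\<lambda>i j. disjnt (\<Omega>s i \<inter> (B k - \<Omega>s k)) (\<Omega>s j \<inter> (B k - \<Omega>s k))) J"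
        unfolding pairwise_def disjnt_def
      proof (intro ballI impI)
        fix i j assume "i \<in> J" "j \<in> J" "i \<noteq> j"
        hence "\<Omega>s i \<inter> \<Omega>s j = {}" using assms(6)[OF iN[OF \<open>i \<in> J\<close>] iN[OF \<open>j \<in> J\<close>]] by blast
        thus "(\<Omega>s i \<inter> (B k - \<Omega>s k)) \<inter> (\<Omega>s j \<inter> (B k - \<Omega>s k)) = {}" by auto
      qed
    qed
    also have "\<dots> \<le> S k" unfolding S_def
    proof (rule measure_mono_fmeasurable[OF _ _ Slm[OF k]])
      show "(\<Union>i\<in>J. \<Omega>s i \<inter> (B k - \<Omega>s k)) \<subseteq> B k - \<Omega>s k" by auto
      show "(\<Union>i\<in>J. \<Omega>s i \<inter> (B k - \<Omega>s k)) \<in> sets lebesgue"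
      proof (rule sets.finite_UN[OF finJ])
        fix i assume "i \<in> J"
        thus "\<Omega>s i \<inter> (B k - \<Omega>s k) \<in> sets lebesgue"
          using fmeasurableD[OF lm[OF iN]] fmeasurableD[OF Slm[OF k]] by (intro sets.Int)
      qed
    qed
    finally show ?thesis .
  qed
  have cardL: "real (card J) * L \<le> d1"
  proof -
    have "real (card J) * L = (\<Sum>i\<in>J. L)" by simp
    also have "\<dots> \<le> (\<Sum>i\<in>J. S i + T i (jj i))"
      by (rule sum_mono) (rule order_trans[OF Llow split])
    also have "\<dots> = (\<Sum>i\<in>J. S i) + (\<Sum>i\<in>J. T i (jj i))" by (simp add: sum.distrib)
    also have "(\<Sum>i\<in>J. S i) \<le> (\<Sum>k=1..N. S k)" by (rule sum_mono2[OF finN JN]) (simp add: S0)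
    also have "(\<Sum>i\<in>J. T i (jj i)) \<le> (\<Sum>i\<in>J. \<Sum>k=1..N. T i k)"
      by (rule sum_mono, rule member_le_sum) (use jN in \<open>auto simp: T0\<close>)
    also have "\<dots> = (\<Sum>k=1..N. \<Sum>i\<in>J. T i k)" by (rule sum.swap)
    also have "\<dots> \<le> (\<Sum>k=1..N. S k)" by (rule sum_mono) (simp add: Tsum)
    also have "(\<Sum>k=1..N. S k) + (\<Sum>k=1..N. S k) = (\<Sum>k=1..N. 2 * S k)" by (simp add: sum.distrib[symmetric])
    finally show ?thesis using sumS by linarith
  qed
  have U: "?\<mu> (\<Union>i\<in>J. B i) \<le> real (card J) * ((1 + c1) * pi * \<eta>0^2)"
  proof -
    have "?\<mu> (\<Union>i\<in>J. B i) \<le> (\<Sum>i\<in>J. ?\<mu> (B i))" by (rule measure_UNION_le[OF finJ]) (auto simp: B_def)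
    also have "\<dots> \<le> (\<Sum>i\<in>J. (1 + c1) * pi * \<eta>0^2)"
    proof (rule sum_mono)
      fix i assume i: "i \<in> J"
      hence "i \<notin> I" using assms(19) by auto
      hence "?\<mu> (\<Omega>s i) < (1 + c1) * pi * \<eta>0^2" using iN[OF i] assms(18) by auto
      thus "?\<mu> (B i) \<le> (1 + c1) * pi * \<eta>0^2" using Bm[OF iN[OF i]] by simp
    qed
    finally show ?thesis by simp
  qed
  have Lpos: "L > 0" using assms(9) assms(14) by (simp add: L_def)
  have cp: "c2 powr (3/2) > 0" using assms(14) by simp
  define A where "A = 20 * pi / 37 * ((1 + c1) / c2 powr (3/2))"
  define X where "X = real (card J) * ((1 + c1) * pi * \<eta>0^2)"
  have A0: "A \<ge> 0" unfolding A_def using assms(13) cp by simp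
  have X0: "X \<ge> 0" unfolding X_def using assms(13) by simp
  have "A * (real (card J) * L) \<le> A * d1" using cardL A0 by (rule mult_left_mono)
  moreover have "A * (real (card J) * L) = (1980 / 1850) * X"
  proof -
    have "A * L = 20 * pi / 37 * (1 + c1) * (99/50) * \<eta>0^2 * (c2 powr (3/2) / c2 powr (3/2))"
      unfolding A_def L_def by (simp add: field_simps)
    also have "\<dots> = 20 * pi / 37 * (1 + c1) * (99/50) * \<eta>0^2" using cp by simp
    finally have AL: "A * L = 20 * pi / 37 * (1 + c1) * (99/50) * \<eta>0^2" .
    have "A * (real (card J) * L) = real (card J) * (A * L)" by (simp add: algebra_simps)
    also have "\<dots> = real (card J) * (20 * pi / 37 * (1 + c1) * (99/50) * \<eta>0^2)" by (simp only: AL)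
    also have "\<dots> = (1980/1850) * X" unfolding X_def by (simp add: algebra_simps)
    finally show ?thesis .
  qed
  moreover have "X \<le> (1980 / 1850) * X" using X0 by simp
  ultimately have "X \<le> A * d1" by linarith
  hence "real (card J) * ((1 + c1) * pi * \<eta>0^2) \<le> 20 * pi / 37 * ((1 + c1) / c2 powr (3/2)) * d1"
    unfolding X_def A_def .
  thus ?thesis using U by (simp add: B_def)
qed

end
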